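(* Let $S$ be a semiring and $M$ a left $S$-semimodule such that every subtractive subsemimodule of $M$ is a direct summand of $M$. Then every left $S$-semimodule is $M$-$e$-projective.
   Context: A semiring $(S,+,0,\cdot,1)$ consists of a commutative monoid $(S,+,0)$ and a monoid $(S,\cdot,1)$ with $0\neq 1$, absorbing zero and both distributive laws; left $S$-semimodules and $S$-linear maps are as for modules without subtraction. A subsemimodule $K\le M$ is subtractive if $m+k=k'$ with $k,k'\in K$ implies $m\in K$. $K$ is a direct summand of $M$ if $M=K\oplus K'$ for some subsemimodule $K'$, meaning every $m\in M$ can be written uniquely as $m=k+k'$ with $k\in K$, $k'\in K'$. For an $S$-linear $h:X\to Y$, $\mathrm{Ker}(h)=\{x\mid h(x)=0\}$; $h$ is $k$-normal if $h(x)=h(x')$ implies $x+k=x'+k'$ for some $k,k'\in\mathrm{Ker}(h)$. A short exact sequence $0\to L\xrightarrow{f}M\xrightarrow{g}N\to0$ (of semimodules or commutative monoids) means: $f$ injective, $f(L)=\mathrm{Ker}(g)$, $g$ surjective and $k$-normal. $P$ is $M$-$e$-projective if for every short exact sequence $0\to L\xrightarrow{f}M\xrightarrow{g}N\to0$ of left $S$-semimodules with middle term $M$, the sequence $0\to\mathrm{Hom}_S(P,L)\xrightarrow{f\circ-}\mathrm{Hom}_S(P,M)\xrightarrow{g\circ-}\mathrm{Hom}_S(P,N)\to0$ is a short exact sequence of commutative monoids (Hom-sets with pointwise addition). *)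

theory Defs
  imports Main
begin

text \<open>A left S-semimodule is a commutative monoid (a type of class comm_monoid_add,
the whole type being the carrier) together with a scalar multiplication sm.\<close>

definition semimodule :: "('s::semiring_1 \<Rightarrow> 'm::comm_monoid_add \<Rightarrow> 'm) \<Rightarrow> bool" where
  "semimodule sm \<longleftrightarrow>
     (\<forall>a b x. sm (a + b) x = sm a x + sm b x) \<and>
     (\<forall>a x y. sm a (x + y) = sm a x + sm a y) \<and>
     (\<forall>a b x. sm (a * b) x = sm a (sm b x)) \<and>
     (\<forall>x. sm 1 x = x) \<and>
     (\<forall>x. sm 0 x = 0) \<and>
     (\<forall>a. sm a 0 = 0)"

definition s_linear :: "('s::semiring_1 \<Rightarrow> 'x::comm_monoid_add \<Rightarrow> 'x) \<Rightarrow>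
    ('s \<Rightarrow> 'y::comm_monoid_add \<Rightarrow> 'y) \<Rightarrow> ('x \<Rightarrow> 'y) \<Rightarrow> bool" where
  "s_linear smX smY h \<longleftrightarrow>
     (\<forall>x y. h (x + y) = h x + h y) \<and> h 0 = 0 \<and> (\<forall>a x. h (smX a x) = smY a (h x))"

definition subsemimodule :: "('s::semiring_1 \<Rightarrow> 'm::comm_monoid_add \<Rightarrow> 'm) \<Rightarrow> 'm set \<Rightarrow> bool" where
  "subsemimodule sm K \<longleftrightarrow> 0 \<in> K \<and> (\<forall>x\<in>K. \<forall>y\<in>K. x + y \<in> K) \<and> (\<forall>a. \<forall>x\<in>K. sm a x \<in> K)"

definition subtractive :: "'m::comm_monoid_add set \<Rightarrow> bool" where
  "subtractive K \<longleftrightarrow> (\<forall>m k k'. k \<in> K \<longrightarrow> k' \<in> K \<longrightarrow> m + k = k' \<longrightarrow> m \<in> K)"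

definition direct_summand :: "('s::semiring_1 \<Rightarrow> 'm::comm_monoid_add \<Rightarrow> 'm) \<Rightarrow> 'm set \<Rightarrow> bool" where
  "direct_summand sm K \<longleftrightarrow> subsemimodule sm K \<and>
     (\<exists>K'. subsemimodule sm K' \<and> (\<forall>m. \<exists>!p. fst p \<in> K \<and> snd p \<in> K' \<and> m = fst p + snd p))"

definition Ker :: "('x \<Rightarrow> 'y::zero) \<Rightarrow> 'x set" where
  "Ker h = {x. h x = 0}"

definition k_normal :: "('x::comm_monoid_add \<Rightarrow> 'y::zero) \<Rightarrow> bool" where
  "k_normal h \<longleftrightarrow> (\<forall>x x'. h x = h x' \<longrightarrow> (\<exists>k\<in>Ker h. \<exists>k'\<in>Ker h. x + k = x' + k'))"

definition semimodule_ses :: "('s::semiring_1 \<Rightarrow> 'l::comm_monoid_add \<Rightarrow> 'l) \<Rightarrow>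
    ('s \<Rightarrow> 'm::comm_monoid_add \<Rightarrow> 'm) \<Rightarrow> ('s \<Rightarrow> 'n::comm_monoid_add \<Rightarrow> 'n) \<Rightarrow>
    ('l \<Rightarrow> 'm) \<Rightarrow> ('m \<Rightarrow> 'n) \<Rightarrow> bool" where
  "semimodule_ses smL smM smN f g \<longleftrightarrow>
     s_linear smL smM f \<and> s_linear smM smN g \<and>
     inj f \<and> range f = Ker g \<and> surj g \<and> k_normal g"

definition Hom :: "('s::semiring_1 \<Rightarrow> 'x::comm_monoid_add \<Rightarrow> 'x) \<Rightarrow>
    ('s \<Rightarrow> 'y::comm_monoid_add \<Rightarrow> 'y) \<Rightarrow> ('x \<Rightarrow> 'y) set" where
  "Hom smX smY = {h. s_linear smX smY h}"

definition monoid_ses :: "'a set \<Rightarrow> 'b set \<Rightarrow> 'c set \<Rightarrow> ('b \<Rightarrow> 'b \<Rightarrow> 'b) \<Rightarrow> 'c \<Rightarrow>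
    ('a \<Rightarrow> 'b) \<Rightarrow> ('b \<Rightarrow> 'c) \<Rightarrow> bool" where
  "monoid_ses A B C plusB zeroC F G \<longleftrightarrow>
     inj_on F A \<and> F ` A = {b \<in> B. G b = zeroC} \<and> G ` B = C \<and>
     (\<forall>b\<in>B. \<forall>b'\<in>B. G b = G b' \<longrightarrow>
        (\<exists>k\<in>{b \<in> B. G b = zeroC}. \<exists>k'\<in>{b \<in> B. G b = zeroC}. plusB b k = plusB b' k'))"

definition hom_sequence_exact :: "('s::semiring_1 \<Rightarrow> 'p::comm_monoid_add \<Rightarrow> 'p) \<Rightarrow>
    ('s \<Rightarrow> 'l::comm_monoid_add \<Rightarrow> 'l) \<Rightarrow> ('s \<Rightarrow> 'm::comm_monoid_add \<Rightarrow> 'm) \<Rightarrow>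
    ('s \<Rightarrow> 'n::comm_monoid_add \<Rightarrow> 'n) \<Rightarrow> ('l \<Rightarrow> 'm) \<Rightarrow> ('m \<Rightarrow> 'n) \<Rightarrow> bool" where
  "hom_sequence_exact smP smL smM smN f g \<longleftrightarrow>
     monoid_ses (Hom smP smL) (Hom smP smM) (Hom smP smN)
       (\<lambda>h h' x. h x + h' x) (\<lambda>x. 0) (\<lambda>h. f \<circ> h) (\<lambda>h. g \<circ> h)"

text \<open>P is M-e-projective, relative to all short exact sequences 0 \<rightarrow> L \<rightarrow> M \<rightarrow> N \<rightarrow> 0
whose outer terms live on the types 'l and 'n (these types are universally
quantified in the main theorem).\<close>
definition e_projective_wrt :: "('s::semiring_1 \<Rightarrow> 'p::comm_monoid_add \<Rightarrow> 'p) \<Rightarrow>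
    ('s \<Rightarrow> 'm::comm_monoid_add \<Rightarrow> 'm) \<Rightarrow> ('s \<Rightarrow> 'l::comm_monoid_add \<Rightarrow> 'l) \<Rightarrow>
    ('s \<Rightarrow> 'n::comm_monoid_add \<Rightarrow> 'n) \<Rightarrow> bool" where
  "e_projective_wrt smP smM smL smN \<longleftrightarrow>
     (\<forall>f g. semimodule_ses smL smM smN f g \<longrightarrow> hom_sequence_exact smP smL smM smN f g)"

end

theory Submission
  imports Defs
begin

theorem mainTheorem9:
  fixes smM :: "'s::semiring_1 \<Rightarrow> 'm::comm_monoid_add \<Rightarrow> 'm"
    and smP :: "'s \<Rightarrow> 'p::comm_monoid_add \<Rightarrow> 'p"
    and smL :: "'s \<Rightarrow> 'l::comm_monoid_add \<Rightarrow> 'l"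
    and smN :: "'s \<Rightarrow> 'n::comm_monoid_add \<Rightarrow> 'n"
  assumes "semimodule smM"
    and "\<forall>K. subsemimodule smM K \<and> subtractive K \<longrightarrow> direct_summand smM K"
    and "semimodule smP" and "semimodule smL" and "semimodule smN"
  shows "e_projective_wrt smP smM smL smN"
  unfolding e_projective_wrt_def
proof (intro allI impI)
  fix f :: "'l \<Rightarrow> 'm" and g :: "'m \<Rightarrow> 'n"
  assume ses: "semimodule_ses smL smM smN f g"
  have fadd: "\<And>x y. f (x + y) = f x + f y" and f0: "f 0 = 0"
    and fsm: "\<And>a x. f (smL a x) = smM a (f x)"
    using ses unfolding semimodule_ses_def s_linear_def by auto
  have gadd: "\<And>x y. g (x + y) = g x + g y" and g0: "g 0 = 0"
    and gsm: "\<And>a x. g (smM a x) = smN a (g x)"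
    using ses unfolding semimodule_ses_def s_linear_def by auto
  have finj: "inj f" and rng: "range f = Ker g" and gsurj: "surj g" and kn: "k_normal g"
    using ses unfolding semimodule_ses_def by auto
  have Mdist: "\<And>a x y. smM a (x + y) = smM a x + smM a y" and Ma0: "\<And>a. smM a 0 = 0"
    using assms(1) unfolding semimodule_def by auto
  define K where "K = range f"
  have gK: "\<And>x. x \<in> K \<Longrightarrow> g x = 0" using rng unfolding K_def Ker_def by auto
  have Kg: "\<And>x. g x = 0 \<Longrightarrow> x \<in> K" using rng unfolding K_def Ker_def by auto
  have subK: "subsemimodule smM K"
    unfolding subsemimodule_def K_def
  proof (intro conjI ballI allI)
    show "0 \<in> range f" using f0[symmetric] by (rule image_eqI) simp
  next
    fix x y assume "x \<in> range f" "y \<in> range f"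
    then obtain u v where "x = f u" "y = f v" by blast
    then have "x + y = f (u + v)" using fadd by simp
    then show "x + y \<in> range f" by (rule image_eqI) simp
  next
    fix a x assume "x \<in> range f"
    then obtain u where "x = f u" by blast
    then have "smM a x = f (smL a u)" using fsm by simp
    then show "smM a x \<in> range f" by (rule image_eqI) simp
  qed
  have subtr: "subtractive K"
    unfolding subtractive_def
  proof (intro allI impI)
    fix m k k' assume "k \<in> K" "k' \<in> K" "m + k = k'"
    then have "g m + g k = g k'" using gadd by metis
    then show "m \<in> K" using gK Kg \<open>k \<in> K\<close> \<open>k' \<in> K\<close> by simp
  qed
  obtain K' where subK': "subsemimodule smM K'"
    and uq: "\<forall>m. \<exists>!p. fst p \<in> K \<and> snd p \<in> K' \<and> m = fst p + snd p"
    using assms(2) subK subtr unfolding direct_summand_def by blast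
  have K'0: "0 \<in> K'" and K'add: "\<And>x y. x \<in> K' \<Longrightarrow> y \<in> K' \<Longrightarrow> x + y \<in> K'"
    and K'sm: "\<And>a x. x \<in> K' \<Longrightarrow> smM a x \<in> K'"
    using subK' unfolding subsemimodule_def by auto
  have K0: "0 \<in> K" and Kadd: "\<And>x y. x \<in> K \<Longrightarrow> y \<in> K \<Longrightarrow> x + y \<in> K"
    and Ksm: "\<And>a x. x \<in> K \<Longrightarrow> smM a x \<in> K"
    using subK unfolding subsemimodule_def by auto
  define pr where "pr m = (THE p. fst p \<in> K \<and> snd p \<in> K' \<and> m = fst p + snd p)" for m
  have pr: "fst (pr m) \<in> K \<and> snd (pr m) \<in> K' \<and> m = fst (pr m) + snd (pr m)" for m
    unfolding pr_def using theI'[OF uq[rule_format, of m]] by blast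
  have pru: "pr m = (a, b)" if "a \<in> K" "b \<in> K'" "m = a + b" for m a b
    unfolding pr_def
    by (rule the1_equality[OF uq[rule_format, of m]]) (use that in auto)
  have ginj: "a = b" if ginjA: "a \<in> K'" "b \<in> K'" "g a = g b" for a b
  proof -
    obtain k k' where "k \<in> Ker g" "k' \<in> Ker g" "a + k = b + k'"
      using kn ginjA(3) unfolding k_normal_def by blast
    then have "k \<in> K" "k' \<in> K" using Kg unfolding Ker_def by auto
    have "pr (a + k) = (k, a)" using pru[of k a "a + k"] \<open>k \<in> K\<close> ginjA(1) by (simp add: add.commute)
    moreover have "pr (a + k) = (k', b)" using pru[of k' b "a + k"] \<open>k' \<in> K\<close> ginjA(2)
        \<open>a + k = b + k'\<close> by (simp add: add.commute)
    ultimately show ?thesis by simp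
  qed
  have gsnd: "g (snd (pr m)) = g m" for m
  proof -
    have "g m = g (fst (pr m)) + g (snd (pr m))" using pr[of m] gadd by metis
    moreover have "g (fst (pr m)) = 0" using gK pr[of m] by blast
    ultimately show ?thesis by simp
  qed
  define p1 where "p1 m = fst (pr m)" for m
  define p2 where "p2 m = snd (pr m)" for m
  have p1K: "p1 m \<in> K" and p2K: "p2 m \<in> K'" and psum: "m = p1 m + p2 m" for m
    using pr unfolding p1_def p2_def by auto
  have p1p2: "p1 m = a \<and> p2 m = b" if "a \<in> K" "b \<in> K'" "m = a + b" for m a b
    using pru[OF that] unfolding p1_def p2_def by simp
  have p1add: "p1 (x + y) = p1 x + p1 y" for x y
  proof -
    have "x + y = (p1 x + p2 x) + (p1 y + p2 y)"
      using psum[of x] psum[of y] by metis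
    also have "\<dots> = (p1 x + p1 y) + (p2 x + p2 y)" by (simp add: ac_simps)
    finally have "x + y = (p1 x + p1 y) + (p2 x + p2 y)" .
    then show ?thesis using p1p2 Kadd K'add p1K p2K by blast
  qed
  have p1sm: "p1 (smM a x) = smM a (p1 x)" for a x
  proof -
    have "smM a x = smM a (p1 x) + smM a (p2 x)" using psum[of x] Mdist by metis
    then show ?thesis using p1p2 Ksm K'sm p1K p2K by blast
  qed
  have p10: "p1 0 = 0" using p1p2[of 0 0 0] K0 K'0 by auto
  have p2eq: "p2 x = p2 y" if "g x = g y" for x y
  proof (rule ginj[OF p2K p2K])
    show "g (p2 x) = g (p2 y)" using gsnd[of x] gsnd[of y] that unfolding p2_def by simp
  qed
  show "hom_sequence_exact smP smL smM smN f g"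
    unfolding hom_sequence_exact_def monoid_ses_def
  proof (intro conjI)
    show "inj_on ((\<circ>) f) (Hom smP smL)"
      by (rule inj_onI) (use finj in \<open>auto simp: fun_eq_iff inj_def\<close>)
    show "(\<circ>) f ` Hom smP smL = {b \<in> Hom smP smM. g \<circ> b = (\<lambda>x. 0)}"
    proof (intro equalityI subsetI)
      fix h assume "h \<in> (\<circ>) f ` Hom smP smL"
      then obtain h0 where h0: "h0 \<in> Hom smP smL" "h = f \<circ> h0" by blast
      have "s_linear smP smM h"
        using h0 fadd f0 fsm unfolding Hom_def s_linear_def by auto
      moreover have "g \<circ> h = (\<lambda>x. 0)" using h0(2) gK unfolding K_def by auto
      ultimately show "h \<in> {b \<in> Hom smP smM. g \<circ> b = (\<lambda>x. 0)}" unfolding Hom_def by auto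
    next
      fix h assume "h \<in> {b \<in> Hom smP smM. g \<circ> b = (\<lambda>x. 0)}"
      then have hl: "s_linear smP smM h" and hg: "\<And>x. g (h x) = 0"
        unfolding Hom_def by (auto simp: fun_eq_iff)
      have hK: "h x \<in> range f" for x using Kg[OF hg[of x]] unfolding K_def .
      define h0 where "h0 x = inv f (h x)" for x
      have fh0: "f (h0 x) = h x" for x unfolding h0_def using hK[of x] by (simp add: f_inv_into_f)
      have "s_linear smP smL h0"
        unfolding s_linear_def
      proof (intro conjI allI)
        fix x y show "h0 (x + y) = h0 x + h0 y"
          using finj fh0 fadd hl unfolding s_linear_def inj_def by metis
      next
        show "h0 0 = 0" using finj fh0 f0 hl unfolding s_linear_def inj_def by metis
      next
        fix a x show "h0 (smP a x) = smL a (h0 x)"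
          using finj fh0 fsm hl unfolding s_linear_def inj_def by metis
      qed
      moreover have "h = f \<circ> h0" using fh0 by (auto simp: fun_eq_iff)
      ultimately show "h \<in> (\<circ>) f ` Hom smP smL" unfolding Hom_def by auto
    qed
    show "(\<circ>) g ` Hom smP smM = Hom smP smN"
    proof (intro equalityI subsetI)
      fix h assume "h \<in> (\<circ>) g ` Hom smP smM"
      then obtain h0 where h0: "h0 \<in> Hom smP smM" "h = g \<circ> h0" by blast
      then show "h \<in> Hom smP smN"
        using gadd g0 gsm unfolding Hom_def s_linear_def by auto
    next
      fix \<phi> assume "\<phi> \<in> Hom smP smN"
      then have pl: "s_linear smP smN \<phi>" unfolding Hom_def by auto
      define \<psi> where "\<psi> x = p2 (SOME m. g m = \<phi> x)" for x
      have \<psi>K: "\<psi> x \<in> K'" for x unfolding \<psi>_def using p2K .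
      have g\<psi>: "g (\<psi> x) = \<phi> x" for x
      proof -
        have "g (SOME m. g m = \<phi> x) = \<phi> x"
          by (rule someI_ex) (use gsurj in \<open>metis surjD\<close>)
        then show ?thesis unfolding \<psi>_def p2_def using gsnd by simp
      qed
      have "s_linear smP smM \<psi>"
        unfolding s_linear_def
      proof (intro conjI allI)
        fix x y show "\<psi> (x + y) = \<psi> x + \<psi> y"
          by (rule ginj) (use \<psi>K K'add g\<psi> gadd pl in \<open>auto simp: s_linear_def\<close>)
      next
        show "\<psi> 0 = 0"
          by (rule ginj) (use \<psi>K K'0 g\<psi> g0 pl in \<open>auto simp: s_linear_def\<close>)
      next
        fix a x show "\<psi> (smP a x) = smM a (\<psi> x)"
          by (rule ginj) (use \<psi>K K'sm g\<psi> gsm pl in \<open>auto simp: s_linear_def\<close>)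
      qed
      moreover have "\<phi> = g \<circ> \<psi>" using g\<psi> by (auto simp: fun_eq_iff)
      ultimately show "\<phi> \<in> (\<circ>) g ` Hom smP smM" unfolding Hom_def by auto
    qed
    show "\<forall>b\<in>Hom smP smM. \<forall>b'\<in>Hom smP smM. g \<circ> b = g \<circ> b' \<longrightarrow>
        (\<exists>k\<in>{b \<in> Hom smP smM. g \<circ> b = (\<lambda>x. 0)}. \<exists>k'\<in>{b \<in> Hom smP smM. g \<circ> b = (\<lambda>x. 0)}.
           (\<lambda>x. b x + k x) = (\<lambda>x. b' x + k' x))"
    proof (intro ballI impI)
      fix h h' assume hH: "h \<in> Hom smP smM" and hH': "h' \<in> Hom smP smM" and eq: "g \<circ> h = g \<circ> h'"
      have lin: "p1 \<circ> u \<in> Hom smP smM" if "u \<in> Hom smP smM" for u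
        using that p1add p10 p1sm unfolding Hom_def s_linear_def by auto
      have ker: "g \<circ> (p1 \<circ> u) = (\<lambda>x. 0)" for u
        using gK p1K by (auto simp: fun_eq_iff)
      have "(\<lambda>x. h x + (p1 \<circ> h') x) = (\<lambda>x. h' x + (p1 \<circ> h) x)"
      proof
        fix x
        have "g (h x) = g (h' x)" using eq by (simp add: fun_eq_iff)
        then have e2: "p2 (h x) = p2 (h' x)" using p2eq by blast
        have "h x + (p1 \<circ> h') x = (p1 (h x) + p2 (h x)) + p1 (h' x)" using psum[of "h x"] by (metis comp_apply)
        also have "\<dots> = (p1 (h' x) + p2 (h' x)) + p1 (h x)" using e2 by (simp add: ac_simps)
        also have "\<dots> = h' x + (p1 \<circ> h) x" using psum[of "h' x"] by (metis comp_apply)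
        finally show "h x + (p1 \<circ> h') x = h' x + (p1 \<circ> h) x" .
      qed
      then show "\<exists>k\<in>{b \<in> Hom smP smM. g \<circ> b = (\<lambda>x. 0)}. \<exists>k'\<in>{b \<in> Hom smP smM. g \<circ> b = (\<lambda>x. 0)}.
           (\<lambda>x. h x + k x) = (\<lambda>x. h' x + k' x)"
        using lin[OF hH] lin[OF hH'] ker by blast
    qed
  qed
qed

end
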